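(* Let $\sigma(x,y)=(x\rightharpoonup y,x\leftharpoonup y)$ be an involutive non-degenerate quiver-theoretic Yang--Baxter map on a quiver $\mathscr{A}$ over $\Lambda$, let $x\star y:=(x\rightharpoonup\cdot)^{-1}(y)$ for $\mathfrak{s}(x)=\mathfrak{s}(y)$, and let $E$ be the closure of (the image of) $\mathscr{A}$ under right-lcms in the structure category $\mathscr{C}(\sigma)$. For $\lambda\in\Lambda$ and a finite set $I=\{x_1,\dots,x_n\}\subseteq\mathscr{A}(\lambda,\Lambda)$ of pairwise distinct arrows, define $\Omega_1(x_1)=x_1$, $\Omega_i(x_1,\dots,x_i)=\Omega_{i-1}(x_1,\dots,x_{i-1})\star\Omega_{i-1}(x_1,\dots,x_{i-2},x_i)$ for $2\le i\le n$, and $\Delta_I=[\Omega_1(x_1)|\Omega_2(x_1,x_2)|\dots|\Omega_n(x_1,\dots,x_n)]\in\mathscr{C}(\sigma)$ (this element is the right-lcm of $I$ and does not depend on the ordering of $I$). Then $E=\{\Delta_I\mid\lambda\in\Lambda,\ I\subseteq\mathscr{A}(\lambda,\Lambda),\ 1\le|I|<\infty\}\cup\mathbf{1}_{\mathscr{A}}$, where $\mathbf{1}_{\mathscr{A}}=\{\mathbf{1}_\lambda\mid\lambda\in\Lambda\}$ is the set of identities of $\mathscr{C}(\sigma)$.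
   Context: A quiver-theoretic Yang--Baxter map is a source/target-preserving map $\sigma$ on composable pairs satisfying the braid relation; involutive: $\sigma^2=\mathrm{id}$; non-degenerate: all $x\rightharpoonup\cdot\colon\mathscr{A}(\mathfrak{t}(x),\Lambda)\to\mathscr{A}(\mathfrak{s}(x),\Lambda)$ and $\cdot\leftharpoonup y\colon\mathscr{A}(\Lambda,\mathfrak{s}(y))\to\mathscr{A}(\Lambda,\mathfrak{t}(y))$ bijective. $\mathscr{C}(\sigma)$ is the category presented by generators $\mathscr{A}$ and relations $x|y\sim(x\rightharpoonup y)|(x\leftharpoonup y)$; $[w]$ denotes the class of a path $w$. A right-lcm of elements is a common right-multiple that left-divides every common right-multiple. *)

theory Defs
  imports Main
begin

text \<open>A quiver over the vertex set L has arrow set A with source/target maps src, tgt.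
  The map sigma on composable pairs is sigma(x,y) = (lact x y, ract x y).\<close>

definition qYB_map ::
  "'v set \<Rightarrow> 'a set \<Rightarrow> ('a \<Rightarrow> 'v) \<Rightarrow> ('a \<Rightarrow> 'v) \<Rightarrow> ('a \<Rightarrow> 'a \<Rightarrow> 'a) \<Rightarrow> ('a \<Rightarrow> 'a \<Rightarrow> 'a) \<Rightarrow> bool" where
  "qYB_map L A src tgt lact ract \<longleftrightarrow>
     (\<forall>x\<in>A. src x \<in> L \<and> tgt x \<in> L) \<and>
     (\<forall>x\<in>A. \<forall>y\<in>A. tgt x = src y \<longrightarrow>
        lact x y \<in> A \<and> ract x y \<in> A \<and> src (lact x y) = src x \<and>
        tgt (lact x y) = src (ract x y) \<and> tgt (ract x y) = tgt y) \<and>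
     (\<forall>x\<in>A. \<forall>y\<in>A. \<forall>z\<in>A. tgt x = src y \<longrightarrow> tgt y = src z \<longrightarrow>
        (let s1 = (\<lambda>(a,b,c). (lact a b, ract a b, c));
             s2 = (\<lambda>(a,b,c). (a, lact b c, ract b c))
         in s1 (s2 (s1 (x,y,z))) = s2 (s1 (s2 (x,y,z)))))"

definition qYB_involutive ::
  "'a set \<Rightarrow> ('a \<Rightarrow> 'v) \<Rightarrow> ('a \<Rightarrow> 'v) \<Rightarrow> ('a \<Rightarrow> 'a \<Rightarrow> 'a) \<Rightarrow> ('a \<Rightarrow> 'a \<Rightarrow> 'a) \<Rightarrow> bool" where
  "qYB_involutive A src tgt lact ract \<longleftrightarrow>
     (\<forall>x\<in>A. \<forall>y\<in>A. tgt x = src y \<longrightarrow>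
        lact (lact x y) (ract x y) = x \<and> ract (lact x y) (ract x y) = y)"

definition qYB_nondegenerate ::
  "'a set \<Rightarrow> ('a \<Rightarrow> 'v) \<Rightarrow> ('a \<Rightarrow> 'v) \<Rightarrow> ('a \<Rightarrow> 'a \<Rightarrow> 'a) \<Rightarrow> ('a \<Rightarrow> 'a \<Rightarrow> 'a) \<Rightarrow> bool" where
  "qYB_nondegenerate A src tgt lact ract \<longleftrightarrow>
     (\<forall>x\<in>A. bij_betw (lact x) {z\<in>A. src z = tgt x} {z\<in>A. src z = src x}) \<and>
     (\<forall>y\<in>A. bij_betw (\<lambda>z. ract z y) {z\<in>A. tgt z = src y} {z\<in>A. tgt z = tgt y})"

text \<open>Paths: a pair (l, w) of a source vertex l and a composable list w of arrows
  starting at l; (l, []) is the empty path (identity) at l.\<close>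

definition valid_path ::
  "'v set \<Rightarrow> 'a set \<Rightarrow> ('a \<Rightarrow> 'v) \<Rightarrow> ('a \<Rightarrow> 'v) \<Rightarrow> 'v \<times> 'a list \<Rightarrow> bool" where
  "valid_path L A src tgt p \<longleftrightarrow>
     fst p \<in> L \<and> set (snd p) \<subseteq> A \<and>
     (snd p \<noteq> [] \<longrightarrow> src (hd (snd p)) = fst p) \<and>
     (\<forall>i. Suc i < length (snd p) \<longrightarrow> tgt (snd p ! i) = src (snd p ! Suc i))"

definition path_tgt :: "('a \<Rightarrow> 'v) \<Rightarrow> 'v \<times> 'a list \<Rightarrow> 'v" where
  "path_tgt tgt p = (if snd p = [] then fst p else tgt (last (snd p)))"

inductive sc_step for L A src tgt lact ract where
  "valid_path L A src tgt (l, u @ [x, y] @ v) \<Longrightarrow>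
   sc_step L A src tgt lact ract (l, u @ [x, y] @ v) (l, u @ [lact x y, ract x y] @ v)"

definition sc_cong where
  "sc_cong L A src tgt lact ract = equivclp (sc_step L A src tgt lact ract)"

definition sc_class where
  "sc_class L A src tgt lact ract p = {q. sc_cong L A src tgt lact ract p q}"

definition sc_mor_from where
  "sc_mor_from L A src tgt lact ract l =
     {sc_class L A src tgt lact ract p | p. valid_path L A src tgt p \<and> fst p = l}"

definition sc_ldiv where
  "sc_ldiv L A src tgt lact ract a b \<longleftrightarrow>
     (\<exists>p q. valid_path L A src tgt p \<and> valid_path L A src tgt q \<and>
        path_tgt tgt p = fst q \<and>
        a = sc_class L A src tgt lact ract p \<and>
        b = sc_class L A src tgt lact ract (fst p, snd p @ snd q))"

definition sc_rlcm where
  "sc_rlcm L A src tgt lact ract l S m \<longleftrightarrow>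
     S \<subseteq> sc_mor_from L A src tgt lact ract l \<and>
     m \<in> sc_mor_from L A src tgt lact ract l \<and>
     (\<forall>a\<in>S. sc_ldiv L A src tgt lact ract a m) \<and>
     (\<forall>c\<in>sc_mor_from L A src tgt lact ract l.
        (\<forall>a\<in>S. sc_ldiv L A src tgt lact ract a c) \<longrightarrow> sc_ldiv L A src tgt lact ract m c)"

inductive_set lcm_closure for L A src tgt lact ract where
  gen: "x \<in> A \<Longrightarrow> sc_class L A src tgt lact ract (src x, [x]) \<in> lcm_closure L A src tgt lact ract"
| lcm: "finite S \<Longrightarrow> (\<forall>a\<in>S. a \<in> lcm_closure L A src tgt lact ract) \<Longrightarrow> l \<in> L \<Longrightarrow>
        sc_rlcm L A src tgt lact ract l S m \<Longrightarrow> m \<in> lcm_closure L A src tgt lact ract"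

definition qstar where
  "qstar A src tgt lact x y = (THE z. z \<in> A \<and> src z = tgt x \<and> lact x z = y)"

text \<open>Omega: with f 0, ..., f k standing for x_1, ..., x_(k+1),
  Omega st k f = Omega_(k+1)(x_1,...,x_(k+1)).\<close>

primrec Omega :: "('a \<Rightarrow> 'a \<Rightarrow> 'a) \<Rightarrow> nat \<Rightarrow> (nat \<Rightarrow> 'a) \<Rightarrow> 'a" where
  "Omega st 0 f = f 0"
| "Omega st (Suc k) f = st (Omega st k f) (Omega st k (f(k := f (Suc k))))"

definition Delta_set where
  "Delta_set L A src tgt lact ract =
     {sc_class L A src tgt lact ract
        (l, map (\<lambda>i. Omega (qstar A src tgt lact) i f) [0..<n]) | l n f.
      l \<in> L \<and> 1 \<le> n \<and> inj_on f {..<n} \<and> (\<forall>i<n. f i \<in> A \<and> src (f i) = l)}"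

definition sc_identities where
  "sc_identities L A src tgt lact ract = {sc_class L A src tgt lact ract (l, []) | l. l \<in> L}"

end

theory Submission
  imports Defs "HOL-Library.Multiset"
begin


fun psi :: "('a \<Rightarrow> 'a \<Rightarrow> 'a) \<Rightarrow> 'a list \<Rightarrow> 'a multiset" where
  "psi lact [] = {#}"
| "psi lact (x # w) = add_mset x (image_mset (lact x) (psi lact w))"

fun phi :: "('a \<Rightarrow> 'a \<Rightarrow> 'a) \<Rightarrow> 'a list \<Rightarrow> 'a multiset \<Rightarrow> 'a multiset" where
  "phi lact [] M = M"
| "phi lact (x # u) M = image_mset (lact x) (phi lact u M)"

fun vp :: "'v set \<Rightarrow> 'a set \<Rightarrow> ('a \<Rightarrow> 'v) \<Rightarrow> ('a \<Rightarrow> 'v) \<Rightarrow> 'v \<Rightarrow> 'a list \<Rightarrow> bool" where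
  "vp L A src tgt l [] = (l \<in> L)"
| "vp L A src tgt l (x # w) = (l \<in> L \<and> x \<in> A \<and> src x = l \<and> vp L A src tgt (tgt x) w)"

lemma psi_append: "psi lact (u @ w) = psi lact u + phi lact u (psi lact w)"
  by (induction u) auto

lemma size_psi: "size (psi lact w) = length w"
  by (induction w) auto

lemma vp_L: "vp L A src tgt l w \<Longrightarrow> l \<in> L"
  by (cases w) auto

lemma path_tgt_Nil[simp]: "path_tgt tgt (l, []) = l"
  by (simp add: path_tgt_def)

lemma path_tgt_Cons: "path_tgt tgt (l, x # w) = path_tgt tgt (tgt x, w)"
  by (simp add: path_tgt_def)

lemma path_tgt_append: "path_tgt tgt (l, u @ w) = path_tgt tgt (path_tgt tgt (l, u), w)"
  by (induction u arbitrary: l) (auto simp: path_tgt_def)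

lemma vp_append:
  "vp L A src tgt l (u @ w) \<longleftrightarrow> vp L A src tgt l u \<and> vp L A src tgt (path_tgt tgt (l, u)) w"
  by (induction u arbitrary: l) (auto simp: path_tgt_Cons vp_L)

lemma idx_Cons:
  "(\<forall>i. Suc i < length (x # w) \<longrightarrow> tgt ((x # w) ! i) = src ((x # w) ! Suc i)) \<longleftrightarrow>
   (w \<noteq> [] \<longrightarrow> tgt x = src (hd w)) \<and> (\<forall>i. Suc i < length w \<longrightarrow> tgt (w ! i) = src (w ! Suc i))"
proof
  assume H: "\<forall>i. Suc i < length (x # w) \<longrightarrow> tgt ((x # w) ! i) = src ((x # w) ! Suc i)"
  have "w \<noteq> [] \<longrightarrow> tgt x = src (hd w)" using H[rule_format, of 0] by (simp add: hd_conv_nth)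
  moreover have "\<forall>i. Suc i < length w \<longrightarrow> tgt (w ! i) = src (w ! Suc i)"
      using H by auto
  ultimately show "(w \<noteq> [] \<longrightarrow> tgt x = src (hd w)) \<and> (\<forall>i. Suc i < length w \<longrightarrow> tgt (w ! i) = src (w ! Suc i))" by blast
next
  assume H: "(w \<noteq> [] \<longrightarrow> tgt x = src (hd w)) \<and> (\<forall>i. Suc i < length w \<longrightarrow> tgt (w ! i) = src (w ! Suc i))"
  show "\<forall>i. Suc i < length (x # w) \<longrightarrow> tgt ((x # w) ! i) = src ((x # w) ! Suc i)"
  proof (intro allI impI)
    fix i assume i: "Suc i < length (x # w)"
    show "tgt ((x # w) ! i) = src ((x # w) ! Suc i)"
    proof (cases i)
      case 0 then show ?thesis using H i by (cases w) auto
    next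
      case (Suc j) then show ?thesis using H i by simp
    qed
  qed
qed

lemma valid_vp:
  assumes "\<forall>x\<in>A. tgt x \<in> L"
  shows "valid_path L A src tgt (l, w) = vp L A src tgt l w"
proof (induction w arbitrary: l)
  case Nil then show ?case by (simp add: valid_path_def)
next
  case (Cons x w)
  show ?case
    unfolding valid_path_def snd_conv fst_conv idx_Cons
    using Cons[of "tgt x"] assms unfolding valid_path_def
    by (cases w) auto
qed

lemma equivclp_map:
  assumes "equivclp r a b" "Q a"
    and "\<And>x y. r x y \<Longrightarrow> Q x \<Longrightarrow> s (f x) (f y)"
    and "\<And>x y. r x y \<Longrightarrow> Q x = Q y"
  shows "equivclp s (f a) (f b) \<and> Q b"
proof -
  have "(symclp r)\<^sup>*\<^sup>* a b" using assms(1) by (simp add: equivclp_def)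
  then show ?thesis
  proof (induction rule: rtranclp_induct)
    case base then show ?case using assms(2) by simp
  next
    case (step y z)
    then have Qy: "Q y" and E: "equivclp s (f a) (f y)" by auto
    from step(2) have "r y z \<or> r z y" by (auto simp: symclp_def)
    then have "Q z \<and> s (f y) (f z) \<or> Q z \<and> s (f z) (f y)"
      using assms(3,4) Qy by metis
    then show ?case using E
      by (meson equivclp_sym equivclp_trans r_into_equivclp)
  qed
qed

lemma Omega_Suc': "Omega st (Suc k) f = Omega st k (\<lambda>j. st (f 0) (f (Suc j)))"
proof (induction k arbitrary: f)
  case 0 then show ?case by simp
next
  case (Suc k)
  have e: "(\<lambda>j. st ((f(Suc k := f (Suc (Suc k)))) 0) ((f(Suc k := f (Suc (Suc k)))) (Suc j)))
        = (\<lambda>j. st (f 0) (f (Suc j)))(k := st (f 0) (f (Suc (Suc k))))"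
    by (auto simp: fun_eq_iff)
  have "Omega st (Suc (Suc k)) f = st (Omega st (Suc k) f) (Omega st (Suc k) (f(Suc k := f (Suc (Suc k)))))"
    by (rule Omega.simps(2))
  also have "\<dots> = st (Omega st k (\<lambda>j. st (f 0) (f (Suc j))))
     (Omega st k (\<lambda>j. st ((f(Suc k := f (Suc (Suc k)))) 0) ((f(Suc k := f (Suc (Suc k)))) (Suc j))))"
    by (simp only: Suc.IH)
  also have "\<dots> = Omega st (Suc k) (\<lambda>j. st (f 0) (f (Suc j)))"
    unfolding e by (simp only: Omega.simps(2))
  finally show ?case .
qed

lemma Dl_Suc: "map (\<lambda>i. Omega st i f) [0..<Suc n] =
   f 0 # map (\<lambda>i. Omega st i (\<lambda>j. st (f 0) (f (Suc j)))) [0..<n]"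
proof -
  have "[0..<Suc n] = 0 # map Suc [0..<n]" by (simp add: map_Suc_upt upt_conv_Cons)
  then show ?thesis by (simp del: Omega.simps(2) upt_Suc add: Omega_Suc')
qed




locale qyb =
  fixes L :: "'v set" and A :: "'a set" and src tgt :: "'a \<Rightarrow> 'v"
    and lact ract :: "'a \<Rightarrow> 'a \<Rightarrow> 'a"
  assumes ybm: "qYB_map L A src tgt lact ract"
    and inv: "qYB_involutive A src tgt lact ract"
    and nd: "qYB_nondegenerate A src tgt lact ract"
begin

abbreviation "VP \<equiv> vp L A src tgt"
abbreviation "CG \<equiv> sc_cong L A src tgt lact ract"
abbreviation "CL \<equiv> sc_class L A src tgt lact ract"
abbreviation "PS \<equiv> psi lact"
abbreviation "ST \<equiv> sc_step L A src tgt lact ract"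
abbreviation "QS \<equiv> qstar A src tgt lact"

lemma endpts: "x \<in> A \<Longrightarrow> src x \<in> L \<and> tgt x \<in> L"
  using ybm unfolding qYB_map_def by blast

lemma comp: "x \<in> A \<Longrightarrow> y \<in> A \<Longrightarrow> tgt x = src y \<Longrightarrow>
   lact x y \<in> A \<and> ract x y \<in> A \<and> src (lact x y) = src x \<and>
   tgt (lact x y) = src (ract x y) \<and> tgt (ract x y) = tgt y"
  using ybm unfolding qYB_map_def by blast

lemma ybe1: "x \<in> A \<Longrightarrow> y \<in> A \<Longrightarrow> z \<in> A \<Longrightarrow> tgt x = src y \<Longrightarrow> tgt y = src z \<Longrightarrow>
   lact (lact x y) (lact (ract x y) z) = lact x (lact y z)"
proof -
  assume a: "x \<in> A" "y \<in> A" "z \<in> A" "tgt x = src y" "tgt y = src z"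
  have "(let s1 = (\<lambda>(a,b,c). (lact a b, ract a b, c));
             s2 = (\<lambda>(a,b,c). (a, lact b c, ract b c))
         in s1 (s2 (s1 (x,y,z))) = s2 (s1 (s2 (x,y,z))))"
    using ybm a unfolding qYB_map_def by blast
  then show ?thesis by (simp add: Let_def)
qed

lemma invol: "x \<in> A \<Longrightarrow> y \<in> A \<Longrightarrow> tgt x = src y \<Longrightarrow> lact (lact x y) (ract x y) = x"
  using inv unfolding qYB_involutive_def by blast

lemma bij: "x \<in> A \<Longrightarrow> bij_betw (lact x) {z\<in>A. src z = tgt x} {z\<in>A. src z = src x}"
  using nd unfolding qYB_nondegenerate_def by blast

lemma valid_iff: "valid_path L A src tgt p = VP (fst p) (snd p)"
  using valid_vp[of A tgt L src "fst p" "snd p"] endpts by (cases p) auto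

lemma psi_sub: "VP l w \<Longrightarrow> set_mset (PS w) \<subseteq> {z\<in>A. src z = l}"
proof (induction w arbitrary: l)
  case Nil then show ?case by simp
next
  case (Cons x w)
  then have x: "x \<in> A" "src x = l" and r: "VP (tgt x) w" by auto
  have "set_mset (PS w) \<subseteq> {z\<in>A. src z = tgt x}" using Cons.IH r by blast
  then show ?case using x comp[of x] by auto
qed

lemma step_intro: "valid_path L A src tgt (l, u @ [x, y] @ v) \<Longrightarrow>
   ST (l, u @ [x, y] @ v) (l, u @ [lact x y, ract x y] @ v)"
  by (rule sc_step.intros)

lemma step_inv:
  assumes "ST p q"
  shows "VP (fst p) (snd p) \<and> VP (fst q) (snd q) \<and> fst p = fst q \<and>
     path_tgt tgt p = path_tgt tgt q \<and> length (snd p) = length (snd q) \<and> PS (snd p) = PS (snd q)"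
  using assms
proof cases
  case (1 l u x y v)
  let ?m = "path_tgt tgt (l, u)"
  from 1 have V: "VP l (u @ [x, y] @ v)" using valid_iff by auto
  then have u: "VP l u" and m0: "VP ?m ([x, y] @ v)" by (simp_all only: vp_append)
  then have m: "VP ?m (x # y # v)" by simp
  then have x: "x \<in> A" "src x = ?m" "?m \<in> L" and y: "y \<in> A" "src y = tgt x" and v: "VP (tgt y) v"
    by auto
  note c = comp[OF x(1) y(1) y(2)[symmetric]]
  have m': "VP ?m (lact x y # ract x y # v)"
    using c x v endpts by auto
  have "VP l (u @ (lact x y # ract x y # v))"
    using vp_append[of L A src tgt l u "lact x y # ract x y # v"] u m' by simp
  then have V': "VP l (u @ [lact x y, ract x y] @ v)" by simp
  have pt: "path_tgt tgt (l, u @ [x, y] @ v) = path_tgt tgt (l, u @ [lact x y, ract x y] @ v)"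
    by (simp add: path_tgt_append path_tgt_Cons c)
  have sub: "set_mset (PS v) \<subseteq> {z\<in>A. src z = tgt y}" using psi_sub v by blast
  have im: "image_mset (lact x \<circ> lact y) (PS v) = image_mset (lact (lact x y) \<circ> lact (ract x y)) (PS v)"
    by (rule image_mset_cong) (use sub ybe1[OF x(1) y(1)] y(2) in auto)
  have "PS ([x, y] @ v) = PS ([lact x y, ract x y] @ v)"
    using im invol[OF x(1) y(1) y(2)[symmetric]]
    by (simp add: multiset.map_comp add_mset_commute)
  then have ps: "PS (u @ [x, y] @ v) = PS (u @ [lact x y, ract x y] @ v)"
    by (simp only: psi_append)
  show ?thesis using 1 V V' pt ps by simp
qed

lemma cong_inv:
  assumes "CG p q" "VP (fst p) (snd p)"
  shows "VP (fst q) (snd q) \<and> fst p = fst q \<and>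
     path_tgt tgt p = path_tgt tgt q \<and> length (snd p) = length (snd q) \<and> PS (snd p) = PS (snd q)"
proof -
  let ?Q = "\<lambda>q. VP (fst q) (snd q) \<and> fst p = fst q \<and>
     path_tgt tgt p = path_tgt tgt q \<and> length (snd p) = length (snd q) \<and> PS (snd p) = PS (snd q)"
  have "equivclp (\<lambda>_ _. True) (id p) (id q) \<and> ?Q q"
  proof (rule equivclp_map[where r = ST, OF assms(1)[unfolded sc_cong_def]])
    show "?Q p" using assms(2) by simp
  next
    fix x y assume s: "ST x y"
    show "True" by simp
    have "VP (fst x) (snd x) \<and> VP (fst y) (snd y) \<and> fst x = fst y \<and>
     path_tgt tgt x = path_tgt tgt y \<and> length (snd x) = length (snd y) \<and> PS (snd x) = PS (snd y)"
      by (rule step_inv[OF s])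
    then show "?Q x = ?Q y" by metis
  qed
  then show ?thesis by blast
qed

lemma cong_refl: "CG p p"
  by (simp add: sc_cong_def)

lemma cong_sym: "CG p q \<Longrightarrow> CG q p"
  unfolding sc_cong_def by (rule equivclp_sym)

lemma cong_trans: "CG p q \<Longrightarrow> CG q r \<Longrightarrow> CG p r"
  unfolding sc_cong_def by (rule equivclp_trans)

lemma step_cong: "ST p q \<Longrightarrow> CG p q"
  unfolding sc_cong_def by (rule r_into_equivclp)

lemma class_eq: "CL p = CL q \<longleftrightarrow> CG p q"
proof
  assume "CL p = CL q"
  then have "q \<in> CL p" by (simp add: sc_class_def cong_refl)
  then show "CG p q" by (simp add: sc_class_def)
next
  assume "CG p q"
  then show "CL p = CL q" unfolding sc_class_def
    using cong_sym cong_trans by blast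
qed

lemma cong_prefix:
  assumes "CG (l, w) (l', w')" "VP l0 u" "path_tgt tgt (l0, u) = l"
  shows "CG (l0, u @ w) (l0, u @ w')"
proof -
  have "equivclp ST ((\<lambda>p. (l0, u @ snd p)) (l, w)) ((\<lambda>p. (l0, u @ snd p)) (l', w')) \<and> fst (l', w') = l"
  proof (rule equivclp_map[where r = ST, OF assms(1)[unfolded sc_cong_def]])
    show "fst (l, w) = l" by simp
  next
    fix x y assume "ST x y"
    then show "(fst x = l) = (fst y = l)"
      by (auto elim: sc_step.cases)
  next
    fix x y assume s: "ST x y" and "fst x = l"
    then obtain u' a b v where x: "x = (l, u' @ [a, b] @ v)" and y: "y = (l, u' @ [lact a b, ract a b] @ v)"
      and val: "valid_path L A src tgt (l, u' @ [a, b] @ v)"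
      by (auto elim: sc_step.cases)
    have "VP l0 ((u @ u') @ [a, b] @ v)"
      using val assms(2,3) by (simp add: valid_iff vp_append path_tgt_append)
    then have "ST (l0, (u @ u') @ [a, b] @ v) (l0, (u @ u') @ [lact a b, ract a b] @ v)"
      by (intro step_intro) (simp add: valid_iff)
    then show "ST ((\<lambda>p. (l0, u @ snd p)) x) ((\<lambda>p. (l0, u @ snd p)) y)"
      using x y by simp
  qed
  then show ?thesis by (simp add: sc_cong_def)
qed

end



lemma image_mset_reflect:
  assumes "image_mset f M \<subseteq># image_mset f N" "inj_on f D" "set_mset M \<subseteq> D" "set_mset N \<subseteq> D"
  shows "M \<subseteq># N"
proof -
  have "image_mset (inv_into D f) (image_mset f M) \<subseteq># image_mset (inv_into D f) (image_mset f N)"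
    by (rule image_mset_subseteq_mono[OF assms(1)])
  moreover have "image_mset (inv_into D f) (image_mset f M) = M"
    using assms(2,3) by (simp add: multiset.map_comp image_mset_cong[where g = id] subsetD)
  moreover have "image_mset (inv_into D f) (image_mset f N) = N"
    using assms(2,4) by (simp add: multiset.map_comp image_mset_cong[where g = id] subsetD)
  ultimately show ?thesis by simp
qed

lemma mset_set_subI: "finite I \<Longrightarrow> \<forall>x\<in>I. x \<in># M \<Longrightarrow> mset_set I \<subseteq># M"
  by (auto simp: subseteq_mset_def count_mset_set' Suc_le_eq)

lemma sub_mset_set: "M \<subseteq># mset_set U \<Longrightarrow> finite U \<Longrightarrow> M = mset_set (set_mset M)"
proof (rule multiset_eqI)
  fix x assume a: "M \<subseteq># mset_set U" "finite U"
  have "count M x \<le> count (mset_set U) x" using a(1) by (simp add: subseteq_mset_def)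
  also have "\<dots> \<le> 1" by (simp add: count_mset_set')
  finally have le: "count M x \<le> 1" .
  show "count M x = count (mset_set (set_mset M)) x"
  proof (cases "x \<in># M")
    case True
    then have "0 < count M x" by simp
    then have "count M x = 1" using le by linarith
    then show ?thesis using True by (simp add: count_mset_set')
  next
    case False then show ?thesis by (simp add: count_mset_set' not_in_iff)
  qed
qed

context qyb begin

lemma K5: "VP l r \<Longrightarrow> z \<in># PS r \<Longrightarrow> \<exists>r'. VP l (z # r') \<and> CG (l, r) (l, z # r')"
proof (induction r arbitrary: l z)
  case Nil then show ?case by simp
next
  case (Cons y r)
  then have y: "l \<in> L" "y \<in> A" "src y = l" and r: "VP (tgt y) r" by auto
  show ?case
  proof (cases "z = y")
    case True then show ?thesis using Cons.prems cong_refl by blast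
  next
    case False
    then obtain z' where z': "z' \<in># PS r" "z = lact y z'" using Cons.prems(2) by auto
    obtain r'' where r'': "VP (tgt y) (z' # r'')" "CG (tgt y, r) (tgt y, z' # r'')"
      using Cons.IH[OF r z'(1)] by blast
    have c1: "CG (l, [y] @ r) (l, [y] @ (z' # r''))"
      by (rule cong_prefix[OF r''(2)]) (use y endpts in \<open>auto simp: path_tgt_Cons\<close>)
    have vv: "VP l (y # z' # r'')" using y r'' by simp
    have st: "ST (l, [] @ [y, z'] @ r'') (l, [] @ [lact y z', ract y z'] @ r'')"
      by (rule step_intro) (use vv in \<open>simp add: valid_iff\<close>)
    have c2: "CG (l, y # z' # r'') (l, z # ract y z' # r'')"
      using step_cong[OF st] z'(2) by simp
    have "VP l (z # ract y z' # r'')"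
      using cong_inv[OF c2] vv by simp
    moreover have "CG (l, y # r) (l, z # ract y z' # r'')"
      using cong_trans[OF c1[simplified] c2] .
    ultimately show ?thesis by blast
  qed
qed

lemma K4: "VP l p \<Longrightarrow> VP l r \<Longrightarrow> PS p \<subseteq># PS r \<Longrightarrow>
  \<exists>q. VP (path_tgt tgt (l, p)) q \<and> CG (l, r) (l, p @ q)"
proof (induction p arbitrary: l r)
  case Nil then show ?case using cong_refl by auto
next
  case (Cons x p)
  then have x: "l \<in> L" "x \<in> A" "src x = l" and p: "VP (tgt x) p" by auto
  have "x \<in># PS (x # p)" by simp
  then have "x \<in># PS r" by (rule mset_subset_eqD[OF Cons.prems(3)])
  then obtain r' where r': "VP l (x # r')" "CG (l, r) (l, x # r')" using K5[OF Cons.prems(2)] by blast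
  have "PS r = PS (x # r')" using cong_inv[OF r'(2)] Cons.prems(2) by simp
  then have im: "image_mset (lact x) (PS p) \<subseteq># image_mset (lact x) (PS r')"
    using Cons.prems(3) by simp
  have inj: "inj_on (lact x) {z\<in>A. src z = tgt x}" using bij[OF x(2)] unfolding bij_betw_def by blast
  have vr: "VP (tgt x) r'" using r' by simp
  have "PS p \<subseteq># PS r'"
    by (rule image_mset_reflect[OF im inj psi_sub[OF p] psi_sub[OF vr]])
  then obtain q where q: "VP (path_tgt tgt (tgt x, p)) q" "CG (tgt x, r') (tgt x, p @ q)"
    using Cons.IH[OF p] \<open>VP (tgt x) r'\<close> by blast
  have "CG (l, [x] @ r') (l, [x] @ (p @ q))"
    by (rule cong_prefix[OF q(2)]) (use x endpts in \<open>auto simp: path_tgt_Cons\<close>)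
  then have "CG (l, r) (l, (x # p) @ q)" using cong_trans[OF r'(2)] by simp
  then show ?case using q(1) by (auto simp: path_tgt_Cons)
qed

lemma K3: "VP l p \<Longrightarrow> VP l r \<Longrightarrow> PS p = PS r \<Longrightarrow> CG (l, r) (l, p)"
proof -
  assume a: "VP l p" "VP l r" "PS p = PS r"
  obtain q where q: "CG (l, r) (l, p @ q)" using K4[OF a(1,2)] a(3) by auto
  have "length r = length (p @ q)" using cong_inv[OF q] a(2) by simp
  moreover have "size (PS p) = size (PS r)" using a(3) by simp
  then have "length r = length p" by (simp add: size_psi)
  ultimately have "q = []" by simp
  then show ?thesis using q by simp
qed

lemma qstar:
  assumes "x \<in> A" "y \<in> A" "src y = src x"
  shows "QS x y \<in> A \<and> src (QS x y) = tgt x \<and> lact x (QS x y) = y"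
proof -
  have b: "bij_betw (lact x) {z\<in>A. src z = tgt x} {z\<in>A. src z = src x}" using bij assms(1) .
  have inj: "inj_on (lact x) {z\<in>A. src z = tgt x}" and img: "lact x ` {z\<in>A. src z = tgt x} = {z\<in>A. src z = src x}"
    using b unfolding bij_betw_def by auto
  have "y \<in> lact x ` {z\<in>A. src z = tgt x}" using img assms(2,3) by simp
  then obtain z where z: "z \<in> {z\<in>A. src z = tgt x}" "y = lact x z" by (rule imageE)
  have "\<exists>!z. z \<in> A \<and> src z = tgt x \<and> lact x z = y"
  proof (rule ex1I[of _ z])
    show "z \<in> A \<and> src z = tgt x \<and> lact x z = y" using z by simp
  next
    fix z' assume "z' \<in> A \<and> src z' = tgt x \<and> lact x z' = y"
    then show "z' = z" using inj_onD[OF inj, of z' z] z by simp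
  qed
  then show ?thesis unfolding qstar_def by (rule theI')
qed

lemma D1: "l \<in> L \<Longrightarrow> inj_on f {..<n} \<Longrightarrow> (\<forall>i<n. f i \<in> A \<and> src (f i) = l) \<Longrightarrow>
   VP l (map (\<lambda>i. Omega QS i f) [0..<n]) \<and> PS (map (\<lambda>i. Omega QS i f) [0..<n]) = mset_set (f ` {..<n})"
proof (induction n arbitrary: f l)
  case 0 then show ?case by simp
next
  case (Suc n)
  define x where "x = f 0"
  define g where "g = (\<lambda>j. QS x (f (Suc j)))"
  have x: "x \<in> A" "src x = l" using Suc.prems(3) x_def by auto
  have gp: "g j \<in> A \<and> src (g j) = tgt x \<and> lact x (g j) = f (Suc j)" if "j < n" for j
    unfolding g_def using qstar[OF x(1), of "f (Suc j)"] Suc.prems(3) that x by auto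
  have ginj: "inj_on g {..<n}"
  proof (rule inj_onI)
    fix i j assume ij: "i \<in> {..<n}" "j \<in> {..<n}" "g i = g j"
    then have "f (Suc i) = f (Suc j)" using gp[of i] gp[of j] by simp
    then show "i = j" using Suc.prems(2) \<open>i \<in> {..<n}\<close> \<open>j \<in> {..<n}\<close> by (auto dest: inj_onD)
  qed
  have tL: "tgt x \<in> L" using endpts x by blast
  have IH: "VP (tgt x) (map (\<lambda>i. Omega QS i g) [0..<n]) \<and> PS (map (\<lambda>i. Omega QS i g) [0..<n]) = mset_set (g ` {..<n})"
    using Suc.IH[OF tL ginj] gp by blast
  have eq: "map (\<lambda>i. Omega QS i f) [0..<Suc n] = x # map (\<lambda>i. Omega QS i g) [0..<n]"
    unfolding Dl_Suc x_def g_def ..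
  have inj2: "inj_on (lact x) (g ` {..<n})"
    using bij[OF x(1)] gp unfolding bij_betw_def by (auto intro: inj_on_subset)
  have img: "image_mset (lact x) (mset_set (g ` {..<n})) = mset_set ((\<lambda>j. f (Suc j)) ` {..<n})"
    using image_mset_mset_set[OF inj2] gp by (simp add: image_image)
  have nin: "x \<notin> (\<lambda>j. f (Suc j)) ` {..<n}"
    using Suc.prems(2) unfolding x_def inj_on_def by auto
  have fimg: "f ` {..<Suc n} = insert x ((\<lambda>j. f (Suc j)) ` {..<n})"
    unfolding lessThan_Suc_eq_insert_0 x_def by (auto simp: image_image)
  show ?case
    unfolding eq using IH x img nin fimg Suc.prems(1) by simp
qed

lemma D2: "l \<in> L \<Longrightarrow> finite I \<Longrightarrow> I \<subseteq> {z\<in>A. src z = l} \<Longrightarrow>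
   \<exists>n f. inj_on f {..<n} \<and> (\<forall>i<n. f i \<in> A \<and> src (f i) = l) \<and> f ` {..<n} = I \<and> n = card I \<and>
   VP l (map (\<lambda>i. Omega QS i f) [0..<n]) \<and> PS (map (\<lambda>i. Omega QS i f) [0..<n]) = mset_set I"
proof -
  assume a: "l \<in> L" "finite I" "I \<subseteq> {z\<in>A. src z = l}"
  obtain h where h: "bij_betw h {0..<card I} I" using ex_bij_betw_nat_finite[OF a(2)] by blast
  then have h': "inj_on h {..<card I}" "h ` {..<card I} = I"
    by (auto simp: bij_betw_def atLeast0LessThan)
  have hA: "\<forall>i<card I. h i \<in> A \<and> src (h i) = l" using h'(2) a(3) by auto
  show ?thesis
    by (intro exI[of _ "card I"] exI[of _ h]) (use D1[OF a(1) h'(1) hA] h' hA in auto)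
qed

lemma mor_from: "c \<in> sc_mor_from L A src tgt lact ract l \<longleftrightarrow> (\<exists>w. VP l w \<and> c = CL (l, w))"
  unfolding sc_mor_from_def valid_iff by force

lemma ldiv_char:
  assumes "VP l w" "VP l w'"
  shows "sc_ldiv L A src tgt lact ract (CL (l, w)) (CL (l, w')) \<longleftrightarrow> PS w \<subseteq># PS w'"
proof
  assume "sc_ldiv L A src tgt lact ract (CL (l, w)) (CL (l, w'))"
  then obtain p q where pq: "VP (fst p) (snd p)" "VP (fst q) (snd q)" "path_tgt tgt p = fst q"
    "CL (l, w) = CL p" "CL (l, w') = CL (fst p, snd p @ snd q)"
    unfolding sc_ldiv_def valid_iff by blast
  have c1: "CG (l, w) p" using pq(4) class_eq by blast
  then have "fst p = l" "PS (snd p) = PS w" using cong_inv[OF c1] assms(1) by auto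
  have c2: "CG (l, w') (fst p, snd p @ snd q)" using pq(5) class_eq by blast
  then have "PS w' = PS (snd p @ snd q)" using cong_inv[OF c2] assms(2) by auto
  then show "PS w \<subseteq># PS w'" using \<open>PS (snd p) = PS w\<close> by (simp add: psi_append)
next
  assume "PS w \<subseteq># PS w'"
  then obtain q where q: "VP (path_tgt tgt (l, w)) q" "CG (l, w') (l, w @ q)" using K4 assms by blast
  show "sc_ldiv L A src tgt lact ract (CL (l, w)) (CL (l, w'))"
    unfolding sc_ldiv_def valid_iff
    apply (rule exI[of _ "(l, w)"], rule exI[of _ "(path_tgt tgt (l, w), q)"])
    using assms q class_eq by auto
qed

end



context qyb begin

definition "Z = {CL (l, w) | l w. VP l w \<and> (\<exists>I. finite I \<and> PS w = mset_set I)}"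

lemma Z_char: "Delta_set L A src tgt lact ract \<union> sc_identities L A src tgt lact ract = Z"
proof
  show "Delta_set L A src tgt lact ract \<union> sc_identities L A src tgt lact ract \<subseteq> Z"
  proof
    fix m assume "m \<in> Delta_set L A src tgt lact ract \<union> sc_identities L A src tgt lact ract"
    then show "m \<in> Z"
    proof
      assume "m \<in> Delta_set L A src tgt lact ract"
      then obtain l n f where m: "m = CL (l, map (\<lambda>i. Omega QS i f) [0..<n])" "l \<in> L"
        "inj_on f {..<n}" "\<forall>i<n. f i \<in> A \<and> src (f i) = l"
        unfolding Delta_set_def by blast
      show "m \<in> Z" using D1[OF m(2,3,4)] m(1) unfolding Z_def by blast
    next
      assume "m \<in> sc_identities L A src tgt lact ract"
      then obtain l where "m = CL (l, [])" "l \<in> L" unfolding sc_identities_def by blast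
      then show "m \<in> Z" unfolding Z_def by (intro CollectI exI[of _ l] exI[of _ "[]"] conjI exI[of _ "{}"]) auto
    qed
  qed
next
  show "Z \<subseteq> Delta_set L A src tgt lact ract \<union> sc_identities L A src tgt lact ract"
  proof
    fix m assume "m \<in> Z"
    then obtain l w I where m: "m = CL (l, w)" "VP l w" "finite I" "PS w = mset_set I"
      unfolding Z_def by blast
    have lL: "l \<in> L" using vp_L m(2) .
    show "m \<in> Delta_set L A src tgt lact ract \<union> sc_identities L A src tgt lact ract"
    proof (cases "I = {}")
      case True
      then have "w = []" using m(4) size_psi[of lact w] by simp
      then show ?thesis using m(1) lL unfolding sc_identities_def by blast
    next
      case False
      have IA: "I \<subseteq> {z\<in>A. src z = l}" using psi_sub[OF m(2)] m(3,4) by simp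
      obtain n f where nf: "inj_on f {..<n}" "\<forall>i<n. f i \<in> A \<and> src (f i) = l" "n = card I"
        "VP l (map (\<lambda>i. Omega QS i f) [0..<n])" "PS (map (\<lambda>i. Omega QS i f) [0..<n]) = mset_set I"
        using D2[OF lL m(3) IA] by blast
      have "CG (l, w) (l, map (\<lambda>i. Omega QS i f) [0..<n])"
        using K3[OF nf(4) m(2)] nf(5) m(4) by simp
      then have "m = CL (l, map (\<lambda>i. Omega QS i f) [0..<n])" using m(1) class_eq by blast
      moreover have "1 \<le> n" using nf(3) False m(3) by (simp add: Suc_le_eq card_gt_0_iff)
      ultimately have "m \<in> Delta_set L A src tgt lact ract"
        unfolding Delta_set_def using lL nf(1,2) by blast
      then show ?thesis by blast
    qed
  qed
qed

lemma in_Z_from: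
  assumes "a \<in> Z" "a \<in> sc_mor_from L A src tgt lact ract l"
  shows "\<exists>w. VP l w \<and> a = CL (l, w) \<and> PS w = mset_set (set_mset (PS w))"
proof -
  obtain w where w: "VP l w" "a = CL (l, w)" using assms(2) mor_from by blast
  obtain l' w' I where w': "a = CL (l', w')" "VP l' w'" "finite I" "PS w' = mset_set I"
    using assms(1) unfolding Z_def by blast
  have "CG (l', w') (l, w)" using w(2) w'(1) class_eq by simp
  then have "PS w = mset_set I" using cong_inv w'(2,4) by fastforce
  then show ?thesis using w w'(3) by (intro exI[of _ w]) simp
qed

lemma closure_sub: "lcm_closure L A src tgt lact ract \<subseteq> Z"
proof
  fix m assume "m \<in> lcm_closure L A src tgt lact ract"
  then show "m \<in> Z"
  proof (induction rule: lcm_closure.induct)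
    case (gen x)
    then have "VP (src x) [x]" using endpts by simp
    moreover have "PS [x] = mset_set {x}" by simp
    ultimately show ?case unfolding Z_def by blast
  next
    case (lcm S l m)
    note R = lcm.hyps(3)[unfolded sc_rlcm_def]
    have SZ: "\<forall>a\<in>S. a \<in> Z" using lcm.IH by simp
    have Smor: "S \<subseteq> sc_mor_from L A src tgt lact ract l" using R by (elim conjE)
    have "\<forall>a\<in>S. \<exists>w. VP l w \<and> a = CL (l, w) \<and> PS w = mset_set (set_mset (PS w))"
      using in_Z_from SZ Smor by (auto simp del: mor_from)
    then obtain W where W0: "\<forall>a\<in>S. VP l (W a) \<and> a = CL (l, W a) \<and> PS (W a) = mset_set (set_mset (PS (W a)))"
      by (rule bchoice[THEN exE])
    then have W: "\<And>a. a \<in> S \<Longrightarrow> VP l (W a) \<and> a = CL (l, W a) \<and> PS (W a) = mset_set (set_mset (PS (W a)))"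
      by blast
    define U where "U = (\<Union>a\<in>S. set_mset (PS (W a)))"
    have fU: "finite U" unfolding U_def using lcm.hyps(1) by simp
    have UA: "U \<subseteq> {z\<in>A. src z = l}" unfolding U_def using psi_sub W by (meson UN_least)
    obtain n f where nf: "VP l (map (\<lambda>i. Omega QS i f) [0..<n])" "PS (map (\<lambda>i. Omega QS i f) [0..<n]) = mset_set U"
      using D2[OF lcm.hyps(2) fU UA] by blast
    define wU where "wU = map (\<lambda>i. Omega QS i f) [0..<n]"
    have cmor: "CL (l, wU) \<in> sc_mor_from L A src tgt lact ract l" unfolding mor_from using nf(1) wU_def by blast
    have "\<forall>a\<in>S. sc_ldiv L A src tgt lact ract a (CL (l, wU))"
    proof
      fix a assume aS: "a \<in> S"
      have "PS (W a) \<subseteq># mset_set U"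
      proof -
        have "set_mset (PS (W a)) \<subseteq> U" unfolding U_def using aS by blast
        then have "mset_set (set_mset (PS (W a))) \<subseteq># mset_set U" using fU by simp
        then show ?thesis using W[OF aS] by simp
      qed
      then show "sc_ldiv L A src tgt lact ract a (CL (l, wU))"
        using ldiv_char[of l "W a" wU] W[OF aS] nf wU_def by simp
    qed
    then have "sc_ldiv L A src tgt lact ract m (CL (l, wU))"
      using R cmor by (elim conjE) (drule bspec[of _ _ "CL (l, wU)"], assumption, blast)
    moreover have "m \<in> sc_mor_from L A src tgt lact ract l" using R by (elim conjE)
    then obtain wm where wm: "VP l wm" "m = CL (l, wm)"
      unfolding mor_from by blast
    ultimately have "PS wm \<subseteq># mset_set U" using ldiv_char[of l wm wU] nf wU_def by simp
    then have "PS wm = mset_set (set_mset (PS wm))" using sub_mset_set fU by blast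
    then show ?case unfolding Z_def using wm by blast
  qed
qed

lemma Z_sub_closure: "Z \<subseteq> lcm_closure L A src tgt lact ract"
proof
  fix m assume "m \<in> Z"
  then obtain l w I where m: "m = CL (l, w)" "VP l w" "finite I" "PS w = mset_set I"
    unfolding Z_def by blast
  have lL: "l \<in> L" using vp_L m(2) .
  have IA: "I \<subseteq> {z\<in>A. src z = l}" using psi_sub[OF m(2)] m(3,4) by simp
  define S where "S = (\<lambda>x. CL (l, [x])) ` I"
  have vx: "VP l [x]" if "x \<in> I" for x using IA that endpts lL by auto
  have Smor: "S \<subseteq> sc_mor_from L A src tgt lact ract l" unfolding S_def
  proof (rule image_subsetI)
    fix x assume "x \<in> I"
    then show "CL (l, [x]) \<in> sc_mor_from L A src tgt lact ract l" unfolding mor_from using vx by blast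
  qed
  have mmor: "m \<in> sc_mor_from L A src tgt lact ract l" unfolding mor_from using m by blast
  have rl: "sc_rlcm L A src tgt lact ract l S m"
    unfolding sc_rlcm_def
  proof (intro conjI ballI impI Smor mmor)
    fix a assume "a \<in> S"
    then obtain x where x: "x \<in> I" "a = CL (l, [x])" unfolding S_def by blast
    have "PS [x] \<subseteq># PS w" using x m(3,4) by simp
    then show "sc_ldiv L A src tgt lact ract a m" using ldiv_char[OF vx[OF x(1)] m(2)] x m(1) by simp
  next
    fix c assume c: "c \<in> sc_mor_from L A src tgt lact ract l"
      and dv: "\<forall>a\<in>S. sc_ldiv L A src tgt lact ract a c"
    obtain w' where w': "VP l w'" "c = CL (l, w')" using c unfolding mor_from by blast
    have "\<forall>x\<in>I. x \<in># PS w'"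
    proof
      fix x assume x: "x \<in> I"
      have "sc_ldiv L A src tgt lact ract (CL (l, [x])) c" using dv x unfolding S_def by blast
      then have "PS [x] \<subseteq># PS w'" using ldiv_char[OF vx[OF x] w'(1)] w'(2) by simp
      then show "x \<in># PS w'" by simp
    qed
    then have "PS w \<subseteq># PS w'" using mset_set_subI[OF m(3)] m(4) by simp
    then show "sc_ldiv L A src tgt lact ract m c" using ldiv_char[OF m(2) w'(1)] m(1) w'(2) by simp
  qed
  have fin: "finite S" unfolding S_def using m(3) by simp
  have cl: "\<forall>a\<in>S. a \<in> lcm_closure L A src tgt lact ract"
  proof
    fix a assume "a \<in> S"
    then obtain x where x: "x \<in> I" "a = CL (l, [x])" unfolding S_def by blast
    have "x \<in> A" "src x = l" using IA x by auto
    then have "CL (src x, [x]) \<in> lcm_closure L A src tgt lact ract" by (intro lcm_closure.gen)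
    then show "a \<in> lcm_closure L A src tgt lact ract" using x \<open>src x = l\<close> by simp
  qed
  show "m \<in> lcm_closure L A src tgt lact ract"
    by (rule lcm_closure.lcm[OF fin cl lL rl])
qed

theorem main: "lcm_closure L A src tgt lact ract =
           Delta_set L A src tgt lact ract \<union> sc_identities L A src tgt lact ract"
  using closure_sub Z_sub_closure Z_char by blast

end

theorem proposition5p10:
  fixes L :: "'v set" and A :: "'a set" and src tgt :: "'a \<Rightarrow> 'v"
    and lact ract :: "'a \<Rightarrow> 'a \<Rightarrow> 'a"
  assumes "qYB_map L A src tgt lact ract"
    and "qYB_involutive A src tgt lact ract"
    and "qYB_nondegenerate A src tgt lact ract"
  shows "lcm_closure L A src tgt lact ract =
           Delta_set L A src tgt lact ract \<union> sc_identities L A src tgt lact ract"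
proof -
  interpret qyb L A src tgt lact ract using assms by unfold_locales
  show ?thesis by (rule main)
qed


end
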